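(* Let $T$ be the monad on $\mathsf{Set}$ generated by an algebraic theory (a signature of operation symbols with finite arities together with a set of equations) none of whose equations is a drop equation. Then the underlying functor of $T$ preserves pullbacks of monomorphisms (in particular it preserves monomorphisms). Consequently, if $\rho$ is an uncountable regular ordinal, then $T$ preserves $\rho^{\mathrm{op}}$-indexed limits, i.e. for every functor $X:\rho^{\mathrm{op}}\to\mathsf{Set}$ the canonical map $T(\lim X) \to \lim T(X)$ is a bijection.
   Context: A signature is a set $\Sigma$ of operation symbols, each with an arity $n \in \mathbb{N}$. For a set $X$, the set $\mathsf{Tm}(X)$ of terms is defined inductively: each $x\in X$ is a term, and if $\mathsf{op}\in\Sigma$ has arity $n$ and $t_1,\dots,t_n \in \mathsf{Tm}(X)$ then $\mathsf{op}(t_1,\dots,t_n) \in \mathsf{Tm}(X)$. An equation is a pair $(t,s)$ of terms in some $\mathsf{Tm}(X)$; an algebraic theory is a signature with a set of equations. The generated monad is $T(X) = \mathsf{Tm}(X)/\sim$, where $\sim$ is the smallest congruence on $\mathsf{Tm}(X)$ containing all substitution instances of the equations; $T$ acts on maps by substituting variables. An equation $(t,s)$ is a drop equation if the sets of free variables of $t$ and $s$ differ. $T$ preserves pullbacks of monomorphisms if it maps every pullback square in $\mathsf{Set}$ one of whose legs is a monomorphism (specifically, pullbacks of an inclusion $Z \subseteq Y$ along any map $f: X\to Y$) to a pullback square. An ordinal $\rho$ is regular if it is a limit ordinal equal to its own cofinality. *)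

theory Defs
  imports Main "HOL-Library.Countable_Set"
begin

datatype ('f, vars_tm: 'x) tm = Var 'x | Op 'f "('f, 'x) tm list"

fun wf_tm :: "('f \<Rightarrow> nat) \<Rightarrow> ('f, 'x) tm \<Rightarrow> bool" where
  "wf_tm ar (Var x) = True"
| "wf_tm ar (Op f ts) = (length ts = ar f \<and> (\<forall>t\<in>set ts. wf_tm ar t))"

definition Tm :: "('f \<Rightarrow> nat) \<Rightarrow> 'x set \<Rightarrow> ('f, 'x) tm set" where
  "Tm ar X = {t. wf_tm ar t \<and> vars_tm t \<subseteq> X}"

fun subst :: "('v \<Rightarrow> ('f, 'x) tm) \<Rightarrow> ('f, 'v) tm \<Rightarrow> ('f, 'x) tm" where
  "subst \<sigma> (Var v) = \<sigma> v"
| "subst \<sigma> (Op f ts) = Op f (map (subst \<sigma>) ts)"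

definition drop_equation :: "('f, 'v) tm \<times> ('f, 'v) tm \<Rightarrow> bool" where
  "drop_equation e = (vars_tm (fst e) \<noteq> vars_tm (snd e))"

inductive_set teq :: "('f \<Rightarrow> nat) \<Rightarrow> (('f, 'v) tm \<times> ('f, 'v) tm) set \<Rightarrow> 'x set
    \<Rightarrow> (('f, 'x) tm \<times> ('f, 'x) tm) set"
  for ar E X where
  refl: "t \<in> Tm ar X \<Longrightarrow> (t, t) \<in> teq ar E X"
| sym: "(s, t) \<in> teq ar E X \<Longrightarrow> (t, s) \<in> teq ar E X"
| trans: "(s, t) \<in> teq ar E X \<Longrightarrow> (t, u) \<in> teq ar E X \<Longrightarrow> (s, u) \<in> teq ar E X"
| inst: "(l, r) \<in> E \<Longrightarrow> (\<forall>v \<in> vars_tm l \<union> vars_tm r. \<sigma> v \<in> Tm ar X)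
          \<Longrightarrow> (subst \<sigma> l, subst \<sigma> r) \<in> teq ar E X"
| cong: "length ts = ar f \<Longrightarrow> list_all2 (\<lambda>s t. (s, t) \<in> teq ar E X) ss ts
          \<Longrightarrow> (Op f ss, Op f ts) \<in> teq ar E X"

text \<open>The generated monad: T(X) = Tm(X)/~ ; on maps, T acts by renaming variables.\<close>
definition Tobj :: "('f \<Rightarrow> nat) \<Rightarrow> (('f, 'v) tm \<times> ('f, 'v) tm) set \<Rightarrow> 'x set
    \<Rightarrow> ('f, 'x) tm set set" where
  "Tobj ar E X = Tm ar X // teq ar E X"

definition Tmap :: "('f \<Rightarrow> nat) \<Rightarrow> (('f, 'v) tm \<times> ('f, 'v) tm) set \<Rightarrow> 'y set
    \<Rightarrow> ('x \<Rightarrow> 'y) \<Rightarrow> ('f, 'x) tm set \<Rightarrow> ('f, 'y) tm set" where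
  "Tmap ar E Y f c = teq ar E Y `` (map_tm id f ` c)"

text \<open>An ordinal is represented by a well-order r (on Field r).
  K is cofinal in r if every element of r lies below some element of K.\<close>
definition cofinal_in :: "'i set \<Rightarrow> 'i rel \<Rightarrow> bool" where
  "cofinal_in K r = (K \<subseteq> Field r \<and> (\<forall>a\<in>Field r. \<exists>b\<in>K. (a, b) \<in> r))"

definition limit_ordinal :: "'i rel \<Rightarrow> bool" where
  "limit_ordinal r = (Well_order r \<and> Field r \<noteq> {} \<and>
     (\<forall>a\<in>Field r. \<exists>b\<in>Field r. (a, b) \<in> r \<and> a \<noteq> b))"

text \<open>Regular: a limit ordinal equal to its cofinality, where the cofinality is the least
  order type of a cofinal subset; since every subset has order type \<le> r, this says that every
  cofinal subset has order type r.\<close>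
definition regular_ordinal :: "'i rel \<Rightarrow> bool" where
  "regular_ordinal r = (limit_ordinal r \<and>
     (\<forall>K. cofinal_in K r \<longrightarrow> (Restr r K, r) \<in> ordIso))"

text \<open>A functor D : \<rho>^op \<rightarrow> Set: sets D a for a \<in> Field r and maps M a b : D b \<rightarrow> D a for (a,b) \<in> r.\<close>
definition op_diagram :: "'i rel \<Rightarrow> ('i \<Rightarrow> 'x set) \<Rightarrow> ('i \<Rightarrow> 'i \<Rightarrow> 'x \<Rightarrow> 'x) \<Rightarrow> bool" where
  "op_diagram r D M =
    ((\<forall>a b. (a, b) \<in> r \<longrightarrow> (\<forall>x\<in>D b. M a b x \<in> D a)) \<and>
     (\<forall>a\<in>Field r. \<forall>x\<in>D a. M a a x = x) \<and>
     (\<forall>a b c. (a, b) \<in> r \<longrightarrow> (b, c) \<in> r \<longrightarrow> (\<forall>x\<in>D c. M a b (M b c x) = M a c x)))"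

text \<open>The limit in Set: compatible families (extensional outside Field r).\<close>
definition set_lim :: "'i rel \<Rightarrow> ('i \<Rightarrow> 'x set) \<Rightarrow> ('i \<Rightarrow> 'i \<Rightarrow> 'x \<Rightarrow> 'x) \<Rightarrow> ('i \<Rightarrow> 'x) set" where
  "set_lim r D M = {x. (\<forall>a\<in>Field r. x a \<in> D a) \<and> (\<forall>a b. (a, b) \<in> r \<longrightarrow> M a b (x b) = x a)
                      \<and> (\<forall>a. a \<notin> Field r \<longrightarrow> x a = undefined)}"

end

theory Submission
  imports Defs
begin


definition ren :: "('x \<Rightarrow> 'y) \<Rightarrow> ('f, 'x) tm \<Rightarrow> ('f, 'y) tm" where
  "ren f t = map_tm id f t"

lemma Tmap_ren: "Tmap ar E Y f c = teq ar E Y `` (ren f ` c)"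
  by (simp add: Tmap_def ren_def)

lemma ren_comp: "ren g (ren f t) = ren (g \<circ> f) t"
  by (simp add: ren_def tm.map_comp)

lemma ren_cong: "(\<And>x. x \<in> vars_tm t \<Longrightarrow> f x = g x) \<Longrightarrow> ren f t = ren g t"
  unfolding ren_def by (rule tm.map_cong0) auto

lemma ren_id_on: "(\<And>x. x \<in> vars_tm t \<Longrightarrow> f x = x) \<Longrightarrow> ren f t = t"
  unfolding ren_def by (rule tm.map_ident_strong) auto

lemma ren_simps[simp]: "ren f (Var x) = Var (f x)" "ren f (Op g ts) = Op g (map (ren f) ts)"
  by (simp_all add: ren_def)

lemma vars_map[simp]: "vars_tm (ren f t) = f ` vars_tm t"
  by (simp add: tm.set_map ren_def)

lemma wf_map[simp]: "wf_tm ar (ren f t) = wf_tm ar t"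
  by (induction t) auto



lemma vars_subst: "vars_tm (subst \<sigma> t) = (\<Union>v\<in>vars_tm t. vars_tm (\<sigma> v))"
  by (induction t) auto

lemma wf_subst: "wf_tm ar t \<Longrightarrow> (\<forall>v\<in>vars_tm t. wf_tm ar (\<sigma> v)) \<Longrightarrow> wf_tm ar (subst \<sigma> t)"
  by (induction t) auto

lemma map_subst: "ren f (subst \<sigma> t) = subst (ren f \<circ> \<sigma>) t"
  by (induction t) auto

lemma finite_vars[simp]: "finite (vars_tm t)"
  by (induction t) auto

lemma Tm_iff: "t \<in> Tm ar X \<longleftrightarrow> wf_tm ar t \<and> vars_tm t \<subseteq> X"
  by (simp add: Tm_def)

locale nd =
  fixes ar :: "'f \<Rightarrow> nat" and E :: "(('f, 'v) tm \<times> ('f, 'v) tm) set"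
  assumes eqs_wf: "\<forall>(l, r) \<in> E. wf_tm ar l \<and> wf_tm ar r"
    and no_drop: "\<forall>e \<in> E. \<not> drop_equation e"
begin

lemma E_vars: "(l, r) \<in> E \<Longrightarrow> vars_tm l = vars_tm r"
  using no_drop by (auto simp: drop_equation_def)

lemma teq_Tm: "(s, t) \<in> teq ar E X \<Longrightarrow> s \<in> Tm ar X \<and> t \<in> Tm ar X"
proof (induction rule: teq.induct)
  case (inst l r \<sigma>)
  then show ?case using eqs_wf
    by (auto simp: Tm_iff vars_subst intro!: wf_subst)
next
  case (cong ts f ss)
  then show ?case
    by (auto simp: Tm_iff list_all2_conv_all_nth in_set_conv_nth; meson subsetD)
qed auto

lemma teq_vars: "(s, t) \<in> teq ar E X \<Longrightarrow> vars_tm s = vars_tm t"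
proof (induction rule: teq.induct)
  case (inst l r \<sigma>)
  then show ?case using E_vars[OF inst(1)] by (simp add: vars_subst)
next
  case (cong ts f ss)
  then have "map vars_tm ss = map vars_tm ts"
    by (auto simp: list_all2_conv_all_nth intro!: nth_equalityI)
  then have "(\<Union>s\<in>set ss. vars_tm s) = (\<Union>t\<in>set ts. vars_tm t)"
    by (metis list.set_map)
  then show ?case by simp
qed auto

lemma teq_restrict: "(s, t) \<in> teq ar E X \<Longrightarrow> vars_tm s \<subseteq> W \<Longrightarrow> (s, t) \<in> teq ar E W"
proof (induction rule: teq.induct)
  case (refl t)
  then show ?case by (auto simp: Tm_iff intro: teq.refl)
next
  case (sym s t)
  have "vars_tm s \<subseteq> W" using sym teq_vars[OF sym.hyps] by simp
  then show ?case using sym.IH by (blast intro: teq.sym)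
next
  case (trans s t u)
  have "vars_tm t \<subseteq> W" using trans teq_vars[OF trans.hyps(1)] by simp
  then show ?case using trans.IH trans.prems by (blast intro: teq.trans)
next
  case (inst l r \<sigma>)
  have "\<forall>v\<in>vars_tm l \<union> vars_tm r. \<sigma> v \<in> Tm ar W"
    using inst E_vars[OF inst(1)] by (auto simp: Tm_iff vars_subst)
  then show ?case by (rule teq.inst[OF inst(1)])
next
  case (cong ts f ss)
  have "list_all2 (\<lambda>s t. (s, t) \<in> teq ar E W) ss ts"
  proof -
    have "\<forall>i<length ss. vars_tm (ss!i) \<subseteq> W" using cong.prems by (auto dest!: nth_mem)
    then show ?thesis using cong.IH by (auto simp: list_all2_conv_all_nth)
  qed
  with cong(1) show ?case by (rule teq.cong)
qed

lemma teq_mono: "(s, t) \<in> teq ar E X \<Longrightarrow> X \<subseteq> W \<Longrightarrow> (s, t) \<in> teq ar E W"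
proof -
  assume a: "(s, t) \<in> teq ar E X" "X \<subseteq> W"
  then have "vars_tm s \<subseteq> W" using teq_Tm[OF a(1)] by (auto simp: Tm_iff)
  then show ?thesis by (rule teq_restrict[OF a(1)])
qed

lemma teq_map0: "(s, t) \<in> teq ar E X \<Longrightarrow> f ` X \<subseteq> Y \<Longrightarrow> (ren f s, ren f t) \<in> teq ar E Y"
proof (induction rule: teq.induct)
  case (refl t)
  then have "ren f t \<in> Tm ar Y" by (auto simp: Tm_iff)
  then show ?case by (rule teq.refl)
next
  case (sym s t)
  then show ?case by (metis teq.sym)
next
  case (trans s t u)
  then show ?case by (metis teq.trans)
next
  case (inst l r \<sigma>)
  have "(ren f \<circ> \<sigma>) v \<in> Tm ar Y" if "v \<in> vars_tm l \<union> vars_tm r" for v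
  proof -
    from inst(2) that have "\<sigma> v \<in> Tm ar X" by blast
    then show ?thesis using inst.prems unfolding Tm_iff by auto
  qed
  then have "(subst (ren f \<circ> \<sigma>) l, subst (ren f \<circ> \<sigma>) r) \<in> teq ar E Y"
    by (intro teq.inst[OF inst(1)]) blast
  then show ?case by (simp only: map_subst)
next
  case (cong ts f' ss)
  have "list_all2 (\<lambda>s t. (s, t) \<in> teq ar E Y) (map (ren f) ss) (map (ren f) ts)"
    using cong by (auto simp: list_all2_conv_all_nth)
  then show ?case using cong(1) by (simp add: teq.cong)
qed

lemma teq_map: "(s, t) \<in> teq ar E X \<Longrightarrow> f ` vars_tm s \<subseteq> Y \<Longrightarrow> (ren f s, ren f t) \<in> teq ar E Y"
  using teq_map0[OF teq_restrict[of s t X "vars_tm s"]] by auto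

lemma teq_inj_reflect:
  assumes "(ren g s1, ren g s2) \<in> teq ar E Y" "vars_tm s1 \<subseteq> W" "inj_on g W" "vars_tm s2 \<subseteq> W"
  shows "(s1, s2) \<in> teq ar E W"
proof -
  let ?h = "inv_into W g"
  have 1: "(ren g s1, ren g s2) \<in> teq ar E (g ` W)"
    using teq_restrict[OF assms(1)] assms(2) by auto
  have "?h ` g ` W \<subseteq> W" using assms(3) by auto
  from teq_map0[OF 1 this] have 2: "(ren (?h \<circ> g) s1, ren (?h \<circ> g) s2) \<in> teq ar E W"
    by (simp add: ren_comp)
  have "ren (?h \<circ> g) s1 = s1" "ren (?h \<circ> g) s2 = s2"
    using assms(2,3,4) by (auto intro!: ren_id_on inv_into_f_f)
  with 2 show ?thesis by simp
qed

lemma teq_equiv: "equiv (Tm ar X) (teq ar E X)"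
  unfolding equiv_def refl_on_def sym_def trans_def
  using teq_Tm by (auto intro: teq.refl teq.sym teq.trans)

lemma cls_eq_iff: "s \<in> Tm ar X \<Longrightarrow> t \<in> Tm ar X \<Longrightarrow>
   (teq ar E X `` {s} = teq ar E X `` {t}) = ((s, t) \<in> teq ar E X)"
  by (rule eq_equiv_class_iff[OF teq_equiv])

lemma Tobj_iff: "c \<in> Tobj ar E X \<longleftrightarrow> (\<exists>s \<in> Tm ar X. c = teq ar E X `` {s})"
  by (auto simp: Tobj_def quotient_def)

lemma Tmap_cls:
  assumes "s \<in> Tm ar X" "f ` vars_tm s \<subseteq> Y"
  shows "Tmap ar E Y f (teq ar E X `` {s}) = teq ar E Y `` {ren f s}"
proof
  show "Tmap ar E Y f (teq ar E X `` {s}) \<subseteq> teq ar E Y `` {ren f s}"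
  proof
    fix u assume "u \<in> Tmap ar E Y f (teq ar E X `` {s})"
    then obtain t where t: "(s, t) \<in> teq ar E X" "(ren f t, u) \<in> teq ar E Y"
      by (auto simp: Tmap_ren)
    have "(ren f s, ren f t) \<in> teq ar E Y" using teq_map[OF t(1) assms(2)] .
    then show "u \<in> teq ar E Y `` {ren f s}" using t(2) by (auto intro: teq.trans)
  qed
next
  have "(s, s) \<in> teq ar E X" using assms(1) by (rule teq.refl)
  then show "teq ar E Y `` {ren f s} \<subseteq> Tmap ar E Y f (teq ar E X `` {s})"
    by (auto simp: Tmap_ren)
qed

end



lemma wo_refl: "Well_order r \<Longrightarrow> a \<in> Field r \<Longrightarrow> (a, a) \<in> r"
  by (auto simp: well_order_on_def linear_order_on_def partial_order_on_def preorder_on_def refl_on_def)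

lemma wo_trans: "Well_order r \<Longrightarrow> (a, b) \<in> r \<Longrightarrow> (b, c) \<in> r \<Longrightarrow> (a, c) \<in> r"
  unfolding well_order_on_def linear_order_on_def partial_order_on_def preorder_on_def trans_def
  by blast

lemma wo_total: "Well_order r \<Longrightarrow> a \<in> Field r \<Longrightarrow> b \<in> Field r \<Longrightarrow> (a, b) \<in> r \<or> (b, a) \<in> r"
  using wo_refl[of r a]
  unfolding well_order_on_def linear_order_on_def total_on_def
  by (cases "a = b") auto

lemma wo_ub:
  assumes wo: "Well_order r" and fin: "finite A"
  shows "A \<subseteq> Field r \<Longrightarrow> Field r \<noteq> {} \<Longrightarrow> \<exists>a\<in>Field r. \<forall>b\<in>A. (b, a) \<in> r"
  using fin
proof (induction A rule: finite_induct)
  case empty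
  then show ?case by auto
next
  case (insert x A)
  then obtain a where a: "a \<in> Field r" "\<forall>b\<in>A. (b, a) \<in> r" by auto
  have x: "x \<in> Field r" using insert by auto
  show ?case
  proof (cases "(x, a) \<in> r")
    case True
    then show ?thesis using a by auto
  next
    case False
    then have "(a, x) \<in> r" using wo_total[OF wo a(1) x] by auto
    then show ?thesis using a x wo_trans[OF wo] wo_refl[OF wo x] by blast
  qed
qed

lemma eventually_const:
  fixes n :: "'i \<Rightarrow> nat"
  assumes reg: "regular_ordinal r" and unc: "\<not> countable (Field r)"
    and mono: "\<And>a b. (a, b) \<in> r \<Longrightarrow> n a \<le> n b"
  shows "\<exists>a0\<in>Field r. \<forall>b. (a0, b) \<in> r \<longrightarrow> n b = n a0"
proof (cases "finite (n ` Field r)")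
  case True
  have ne: "Field r \<noteq> {}" using unc by auto
  define m where "m = Max (n ` Field r)"
  have "m \<in> n ` Field r" unfolding m_def using True ne by (intro Max_in) auto
  then obtain a0 where a0: "a0 \<in> Field r" "n a0 = m" by auto
  have "n b = n a0" if "(a0, b) \<in> r" for b
  proof -
    have "b \<in> Field r" using that by (rule FieldI2)
    then have "n b \<le> m" unfolding m_def using True by (intro Max_ge) auto
    moreover have "n a0 \<le> n b" using mono[OF that] .
    ultimately show ?thesis using a0 by simp
  qed
  then show ?thesis using a0 by blast
next
  case False
  have wo: "Well_order r" using reg by (simp add: regular_ordinal_def limit_ordinal_def)
  have "\<forall>k. \<exists>a\<in>Field r. k \<le> n a"
  proof
    fix k
    show "\<exists>a\<in>Field r. k \<le> n a"
    proof (rule ccontr)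
      assume "\<not> ?thesis"
      then have "n ` Field r \<subseteq> {..<k}" by auto
      then have "finite (n ` Field r)" using finite_subset by blast
      then show False using False by simp
    qed
  qed
  then obtain ak where ak: "\<And>k. ak k \<in> Field r \<and> k \<le> n (ak k)" by metis
  define K where "K = range ak"
  have "cofinal_in K r"
    unfolding cofinal_in_def
  proof
    show "K \<subseteq> Field r" using ak by (auto simp: K_def)
    show "\<forall>a\<in>Field r. \<exists>b\<in>K. (a, b) \<in> r"
    proof
      fix a assume a: "a \<in> Field r"
      let ?b = "ak (Suc (n a))"
      have "(a, ?b) \<in> r"
      proof (rule ccontr)
        assume "(a, ?b) \<notin> r"
        then have "(?b, a) \<in> r" using wo_total[OF wo a] ak by blast
        then have "n ?b \<le> n a" by (rule mono)
        then show False using ak[of "Suc (n a)"] by simp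
      qed
      then show "\<exists>b\<in>K. (a, b) \<in> r" by (auto simp: K_def)
    qed
  qed
  then have "(Restr r K, r) \<in> ordIso" using reg by (simp add: regular_ordinal_def)
  then obtain f where "bij_betw f (Field (Restr r K)) (Field r)"
    by (auto simp: ordIso_def iso_def)
  then have "Field r = f ` Field (Restr r K)" by (simp add: bij_betw_def)
  moreover have "countable (Field (Restr r K))"
  proof (rule countable_subset)
    show "Field (Restr r K) \<subseteq> K" by (auto simp: Field_def)
    show "countable K" by (simp add: K_def)
  qed
  ultimately have "countable (Field r)" by simp
  then show ?thesis using unc by simp
qed



context nd begin

lemma Tm_mono: "t \<in> Tm ar X \<Longrightarrow> X \<subseteq> Y \<Longrightarrow> t \<in> Tm ar Y"
  by (auto simp: Tm_iff)

lemma cls_in_Tobj: "s \<in> Tm ar X \<Longrightarrow> teq ar E X `` {s} \<in> Tobj ar E X"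
  by (auto simp: Tobj_iff)

lemma ren_Tm: "s \<in> Tm ar X \<Longrightarrow> f ` vars_tm s \<subseteq> Y \<Longrightarrow> ren f s \<in> Tm ar Y"
  by (auto simp: Tm_iff)

lemma part1:
  fixes X :: "'x set" and Y :: "'y set"
  assumes fXY: "f ` X \<subseteq> Y" and ZY: "Z \<subseteq> Y"
  defines "P \<equiv> {x \<in> X. f x \<in> Z}"
  shows "bij_betw (\<lambda>c. (Tmap ar E X id c, Tmap ar E Z f c)) (Tobj ar E P)
           {(a, b). a \<in> Tobj ar E X \<and> b \<in> Tobj ar E Z \<and> Tmap ar E Y f a = Tmap ar E Y id b}"
proof -
  have PX: "P \<subseteq> X" and fPZ: "f ` P \<subseteq> Z" by (auto simp: P_def)
  have img: "(Tmap ar E X id c, Tmap ar E Z f c) = (teq ar E X `` {s}, teq ar E Z `` {ren f s})"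
    if "s \<in> Tm ar P" "c = teq ar E P `` {s}" for s c
  proof -
    have "ren id s = s" by (rule ren_id_on) simp
    moreover have "Tmap ar E X id c = teq ar E X `` {ren id s}"
      using that PX by (auto simp: Tm_iff intro!: Tmap_cls)
    moreover have "Tmap ar E Z f c = teq ar E Z `` {ren f s}"
      using that fPZ by (auto simp: Tm_iff intro!: Tmap_cls)
    ultimately show ?thesis by simp
  qed
  show ?thesis
  proof (rule bij_betwI')
    fix c1 c2 assume c: "c1 \<in> Tobj ar E P" "c2 \<in> Tobj ar E P"
    then obtain s1 s2 where s: "s1 \<in> Tm ar P" "c1 = teq ar E P `` {s1}"
      "s2 \<in> Tm ar P" "c2 = teq ar E P `` {s2}" by (auto simp: Tobj_iff)
    show "((Tmap ar E X id c1, Tmap ar E Z f c1) = (Tmap ar E X id c2, Tmap ar E Z f c2)) = (c1 = c2)"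
    proof
      assume "(Tmap ar E X id c1, Tmap ar E Z f c1) = (Tmap ar E X id c2, Tmap ar E Z f c2)"
      then have "teq ar E X `` {s1} = teq ar E X `` {s2}" using img s by simp
      moreover have "s1 \<in> Tm ar X" "s2 \<in> Tm ar X" using s PX by (auto simp: Tm_iff)
      ultimately have "(s1, s2) \<in> teq ar E X" by (simp add: cls_eq_iff)
      then have "(s1, s2) \<in> teq ar E P" using s by (auto simp: Tm_iff intro: teq_restrict)
      then show "c1 = c2" using s by (simp add: cls_eq_iff)
    qed simp
  next
    fix c assume "c \<in> Tobj ar E P"
    then obtain s where s: "s \<in> Tm ar P" "c = teq ar E P `` {s}" by (auto simp: Tobj_iff)
    have sX: "s \<in> Tm ar X" using s PX by (auto simp: Tm_iff)
    have fsZ: "ren f s \<in> Tm ar Z" using s fPZ by (auto simp: Tm_iff)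
    have "Tmap ar E Y f (teq ar E X `` {s}) = teq ar E Y `` {ren f s}"
      using sX fXY by (auto simp: Tm_iff intro!: Tmap_cls)
    moreover have "id ` vars_tm (ren f s) \<subseteq> Y" using fsZ ZY unfolding Tm_iff by auto
    then have "Tmap ar E Y id (teq ar E Z `` {ren f s}) = teq ar E Y `` {ren id (ren f s)}"
      by (rule Tmap_cls[OF fsZ])
    moreover have "ren id (ren f s) = ren f s" by (rule ren_id_on) simp
    ultimately show "(Tmap ar E X id c, Tmap ar E Z f c) \<in>
        {(a, b). a \<in> Tobj ar E X \<and> b \<in> Tobj ar E Z \<and> Tmap ar E Y f a = Tmap ar E Y id b}"
      using img[OF s] sX fsZ by (simp add: cls_in_Tobj)
  next
    fix ab assume "ab \<in> {(a, b). a \<in> Tobj ar E X \<and> b \<in> Tobj ar E Z \<and> Tmap ar E Y f a = Tmap ar E Y id b}"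
    then obtain s t where st: "s \<in> Tm ar X" "t \<in> Tm ar Z" "ab = (teq ar E X `` {s}, teq ar E Z `` {t})"
      and eq: "Tmap ar E Y f (teq ar E X `` {s}) = Tmap ar E Y id (teq ar E Z `` {t})"
      by (auto simp: Tobj_iff)
    have "Tmap ar E Y f (teq ar E X `` {s}) = teq ar E Y `` {ren f s}"
      using st fXY by (auto simp: Tm_iff intro!: Tmap_cls)
    moreover have "Tmap ar E Y id (teq ar E Z `` {t}) = teq ar E Y `` {ren id t}"
      using st ZY by (auto simp: Tm_iff intro!: Tmap_cls)
    moreover have "ren id t = t" by (rule ren_id_on) simp
    ultimately have "teq ar E Y `` {ren f s} = teq ar E Y `` {t}" using eq by simp
    moreover have "ren f s \<in> Tm ar Y" using st fXY by (auto simp: Tm_iff)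
    moreover have "t \<in> Tm ar Y" using st ZY by (auto simp: Tm_iff)
    ultimately have rel: "(ren f s, t) \<in> teq ar E Y"
      by (simp add: cls_eq_iff)
    have "f ` vars_tm s \<subseteq> Z" using teq_vars[OF rel] st by (auto simp: Tm_iff)
    then have sP: "s \<in> Tm ar P" using st by (auto simp: Tm_iff P_def)
    have "(ren f s, t) \<in> teq ar E Z" using teq_restrict[OF rel] \<open>f ` vars_tm s \<subseteq> Z\<close> by simp
    moreover have "ren f s \<in> Tm ar Z" using sP fPZ by (auto simp: Tm_iff)
    ultimately have "teq ar E Z `` {ren f s} = teq ar E Z `` {t}"
      using st by (simp add: cls_eq_iff)
    then show "\<exists>c\<in>Tobj ar E P. ab = (Tmap ar E X id c, Tmap ar E Z f c)"
      using img[OF sP HOL.refl] st sP by (auto intro!: bexI[of _ "teq ar E P `` {s}"] cls_in_Tobj)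
  qed
qed

lemma part2:
  fixes X :: "'x set" and Y :: "'y set"
  assumes "g ` X \<subseteq> Y" "inj_on g X"
  shows "inj_on (Tmap ar E Y g) (Tobj ar E X)"
proof (rule inj_onI)
  fix c1 c2 assume c: "c1 \<in> Tobj ar E X" "c2 \<in> Tobj ar E X" and eq: "Tmap ar E Y g c1 = Tmap ar E Y g c2"
  then obtain s1 s2 where s: "s1 \<in> Tm ar X" "c1 = teq ar E X `` {s1}"
      "s2 \<in> Tm ar X" "c2 = teq ar E X `` {s2}" by (auto simp: Tobj_iff)
  have "Tmap ar E Y g c1 = teq ar E Y `` {ren g s1}" "Tmap ar E Y g c2 = teq ar E Y `` {ren g s2}"
    using s assms by (auto simp: Tm_iff intro!: Tmap_cls)
  with eq have "teq ar E Y `` {ren g s1} = teq ar E Y `` {ren g s2}" by simp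
  moreover have m: "ren g s1 \<in> Tm ar Y" "ren g s2 \<in> Tm ar Y" using s assms by (auto simp: Tm_iff)
  ultimately have "(ren g s1, ren g s2) \<in> teq ar E Y"
    using cls_eq_iff[OF m] by blast
  then have "(s1, s2) \<in> teq ar E X"
    using s assms by (intro teq_inj_reflect[where g=g]) (auto simp: Tm_iff)
  then show "c1 = c2" using s cls_eq_iff[of s1 X s2] by simp
qed

end


context nd begin

lemma part3:
  fixes r :: "'i rel" and D :: "'i \<Rightarrow> 'c set" and M :: "'i \<Rightarrow> 'i \<Rightarrow> 'c \<Rightarrow> 'c"
  assumes reg: "regular_ordinal r" and unc: "\<not> countable (Field r)" and od: "op_diagram r D M"
  shows "bij_betw (\<lambda>c a. if a \<in> Field r then Tmap ar E (D a) (\<lambda>x. x a) c else undefined)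
          (Tobj ar E (set_lim r D M))
          (set_lim r (\<lambda>a. Tobj ar E (D a)) (\<lambda>a b. Tmap ar E (D a) (M a b)))"
proof -
  have wo: "Well_order r" using reg by (simp add: regular_ordinal_def limit_ordinal_def)
  have Fne: "Field r \<noteq> {}" using unc by auto
  have Md: "\<And>a b x. (a, b) \<in> r \<Longrightarrow> x \<in> D b \<Longrightarrow> M a b x \<in> D a"
    using od by (auto simp: op_diagram_def)
  have Mc: "\<And>a b c x. (a, b) \<in> r \<Longrightarrow> (b, c) \<in> r \<Longrightarrow> x \<in> D c \<Longrightarrow> M a b (M b c x) = M a c x"
    using od by (auto simp: op_diagram_def)
  define L where "L = set_lim r D M"
  have LD: "\<And>x a. x \<in> L \<Longrightarrow> a \<in> Field r \<Longrightarrow> x a \<in> D a" by (auto simp: L_def set_lim_def)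
  have LM: "\<And>x a b. x \<in> L \<Longrightarrow> (a, b) \<in> r \<Longrightarrow> M a b (x b) = x a" by (auto simp: L_def set_lim_def)
  have LU: "\<And>x a. x \<in> L \<Longrightarrow> a \<notin> Field r \<Longrightarrow> x a = undefined" by (auto simp: L_def set_lim_def)
  have Lin: "x \<in> L" if "\<And>a. a \<in> Field r \<Longrightarrow> x a \<in> D a" "\<And>a b. (a, b) \<in> r \<Longrightarrow> M a b (x b) = x a"
    "\<And>a. a \<notin> Field r \<Longrightarrow> x a = undefined" for x
    using that by (auto simp: L_def set_lim_def)
  define \<Phi> where "\<Phi> = (\<lambda>c a. if a \<in> Field r then Tmap ar E (D a) (\<lambda>x. x a) c else undefined)"
  define T where "T = set_lim r (\<lambda>a. Tobj ar E (D a)) (\<lambda>a b. Tmap ar E (D a) (M a b))"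
  have piTm: "ren (\<lambda>x. x a) s \<in> Tm ar (D a)" if "s \<in> Tm ar L" "a \<in> Field r" for s a
    using that LD by (auto simp: Tm_iff)
  have Phi_cls: "\<Phi> (teq ar E L `` {s}) a = teq ar E (D a) `` {ren (\<lambda>x. x a) s}"
    if "s \<in> Tm ar L" "a \<in> Field r" for s a
  proof -
    have "(\<lambda>x. x a) ` vars_tm s \<subseteq> D a" using that LD by (auto simp: Tm_iff)
    then show ?thesis using that by (simp add: \<Phi>_def Tmap_cls)
  qed
  have Phi_out: "\<Phi> c a = undefined" if "a \<notin> Field r" for c a
    using that by (simp add: \<Phi>_def)
  have "bij_betw \<Phi> (Tobj ar E L) T"
  proof (rule bij_betwI')
    fix c1 c2 assume "c1 \<in> Tobj ar E L" "c2 \<in> Tobj ar E L"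
    then obtain s1 s2 where s: "s1 \<in> Tm ar L" "c1 = teq ar E L `` {s1}"
      "s2 \<in> Tm ar L" "c2 = teq ar E L `` {s2}" by (auto simp: Tobj_iff)
    show "(\<Phi> c1 = \<Phi> c2) = (c1 = c2)"
    proof
      assume eq: "\<Phi> c1 = \<Phi> c2"
      define V where "V = vars_tm s1 \<union> vars_tm s2"
      have VL: "V \<subseteq> L" using s by (auto simp: V_def Tm_iff)
      have finV: "finite V" by (simp add: V_def)
      have sep: "\<exists>a\<in>Field r. x a \<noteq> y a" if "x \<in> L" "y \<in> L" "x \<noteq> y" for x y
      proof (rule ccontr)
        assume "\<not> ?thesis"
        then have "x a = y a" for a using LU[OF that(1), of a] LU[OF that(2), of a] by (cases "a \<in> Field r") auto
        then show False using that by auto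
      qed
      define PP where "PP = {(x, y). x \<in> V \<and> y \<in> V \<and> x \<noteq> y}"
      have "\<forall>p\<in>PP. \<exists>a. a \<in> Field r \<and> fst p a \<noteq> snd p a"
        using sep VL unfolding PP_def by (auto; meson subsetD)
      then obtain pick where pick: "\<forall>p\<in>PP. pick p \<in> Field r \<and> fst p (pick p) \<noteq> snd p (pick p)"
        by metis
      have "finite PP" by (rule finite_subset[of _ "V \<times> V"]) (use finV in \<open>auto simp: PP_def\<close>)
      then have "finite (pick ` PP)" by simp
      moreover have "pick ` PP \<subseteq> Field r" using pick by auto
      ultimately obtain a where a: "a \<in> Field r" "\<forall>b\<in>pick ` PP. (b, a) \<in> r"
        using wo_ub[OF wo] Fne by blast
      have injV: "inj_on (\<lambda>x. x a) V"
      proof (rule inj_onI, rule ccontr)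
        fix x y assume xy: "x \<in> V" "y \<in> V" "x a = y a" "x \<noteq> y"
        then have p: "(x, y) \<in> PP" by (simp add: PP_def)
        then have "(pick (x, y), a) \<in> r" "x (pick (x, y)) \<noteq> y (pick (x, y))" using a pick by auto
        moreover have "x \<in> L" "y \<in> L" using xy VL by auto
        ultimately show False using LM xy(3) by metis
      qed
      have "\<Phi> c1 a = \<Phi> c2 a" using eq by simp
      then have "teq ar E (D a) `` {ren (\<lambda>x. x a) s1} = teq ar E (D a) `` {ren (\<lambda>x. x a) s2}"
        using Phi_cls s a(1) by simp
      then have "(ren (\<lambda>x. x a) s1, ren (\<lambda>x. x a) s2) \<in> teq ar E (D a)"
        using cls_eq_iff[OF piTm[OF s(1) a(1)] piTm[OF s(3) a(1)]] by blast
      then have "(s1, s2) \<in> teq ar E V"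
        by (rule teq_inj_reflect[OF _ _ injV]) (auto simp: V_def)
      then have "(s1, s2) \<in> teq ar E L" using VL by (rule teq_mono)
      then show "c1 = c2" using s cls_eq_iff[of s1 L s2] by simp
    qed simp
  next
    fix c assume "c \<in> Tobj ar E L"
    then obtain s where s: "s \<in> Tm ar L" "c = teq ar E L `` {s}" by (auto simp: Tobj_iff)
    show "\<Phi> c \<in> T" unfolding T_def set_lim_def
    proof (intro CollectI conjI allI ballI impI)
      fix a assume "a \<in> Field r"
      then show "\<Phi> c a \<in> Tobj ar E (D a)" using s Phi_cls[OF s(1)] cls_in_Tobj[OF piTm[OF s(1)]] by simp
    next
      fix a b assume ab: "(a, b) \<in> r"
      then have F: "a \<in> Field r" "b \<in> Field r" by (auto intro: FieldI1 FieldI2)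
      have "M a b ` vars_tm (ren (\<lambda>x. x b) s) \<subseteq> D a" using s LD F Md[OF ab] by (auto simp: Tm_iff)
      then have "Tmap ar E (D a) (M a b) (\<Phi> c b) = teq ar E (D a) `` {ren (M a b) (ren (\<lambda>x. x b) s)}"
        using Phi_cls[OF s(1) F(2)] s(2) Tmap_cls[OF piTm[OF s(1) F(2)]] by simp
      also have "ren (M a b) (ren (\<lambda>x. x b) s) = ren (\<lambda>x. x a) s"
        unfolding ren_comp using s LM[OF _ ab] by (intro ren_cong) (auto simp: Tm_iff)
      finally show "Tmap ar E (D a) (M a b) (\<Phi> c b) = \<Phi> c a"
        using Phi_cls[OF s(1) F(1)] s(2) by simp
    next
      fix a assume "a \<notin> Field r"
      then show "\<Phi> c a = undefined" by (rule Phi_out)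
    qed
  next
    fix y assume "y \<in> T"
    then have yT: "\<And>a. a \<in> Field r \<Longrightarrow> y a \<in> Tobj ar E (D a)"
      and yM: "\<And>a b. (a, b) \<in> r \<Longrightarrow> Tmap ar E (D a) (M a b) (y b) = y a"
      and yU: "\<And>a. a \<notin> Field r \<Longrightarrow> y a = undefined"
      by (auto simp: T_def set_lim_def)
    have "\<forall>a\<in>Field r. \<exists>s. s \<in> Tm ar (D a) \<and> y a = teq ar E (D a) `` {s}"
      using yT by (auto simp: Tobj_iff)
    then obtain sr where sr: "\<And>a. a \<in> Field r \<Longrightarrow> sr a \<in> Tm ar (D a) \<and> y a = teq ar E (D a) `` {sr a}"
      by metis
    define V where "V a = vars_tm (sr a)" for a
    have VD: "V a \<subseteq> D a" if "a \<in> Field r" for a using sr[OF that] by (auto simp: V_def Tm_iff)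
    have compat: "(ren (M a b) (sr b), sr a) \<in> teq ar E (D a)" if ab: "(a, b) \<in> r" for a b
    proof -
      have F: "a \<in> Field r" "b \<in> Field r" using ab by (auto intro: FieldI1 FieldI2)
      have Mv: "M a b ` vars_tm (sr b) \<subseteq> D a" using VD[OF F(2)] Md[OF ab] by (auto simp: V_def)
      have "Tmap ar E (D a) (M a b) (y b) = teq ar E (D a) `` {ren (M a b) (sr b)}"
        using sr[OF F(2)] Tmap_cls[OF _ Mv] by simp
      then have "teq ar E (D a) `` {ren (M a b) (sr b)} = teq ar E (D a) `` {sr a}"
        using yM[OF ab] sr[OF F(1)] by simp
      moreover have "ren (M a b) (sr b) \<in> Tm ar (D a)"
        using \<open>M a b ` vars_tm (sr b) \<subseteq> D a\<close> sr[OF F(2)] by (auto simp: Tm_iff)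
      ultimately show ?thesis using cls_eq_iff sr[OF F(1)] by blast
    qed
    have Vimg: "M a b ` V b = V a" if "(a, b) \<in> r" for a b
      using teq_vars[OF compat[OF that]] by (simp add: V_def)
    define n where "n a = card (V a)" for a
    have "n a \<le> n b" if "(a, b) \<in> r" for a b
      unfolding n_def using Vimg[OF that] card_image_le[of "V b" "M a b"] by (simp add: V_def)
    then obtain a0 where a0: "a0 \<in> Field r" "\<And>b. (a0, b) \<in> r \<Longrightarrow> n b = n a0"
      using eventually_const[OF reg unc] by blast
    have hinj: "inj_on (M a0 a) (V a)" if "(a0, a) \<in> r" for a
    proof -
      have "card (M a0 a ` V a) = card (V a)"
        using Vimg[OF that] a0(2)[OF that] by (simp add: n_def)
      then show ?thesis by (simp add: inj_on_iff_eq_card V_def)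
    qed
    define h where "h a = inv_into (V a) (M a0 a)" for a
    define \<theta> where "\<theta> v = (\<lambda>a. if a \<in> Field r then (if (a0, a) \<in> r then h a v else M a a0 v) else undefined)" for v
    have hV: "h a v \<in> V a \<and> M a0 a (h a v) = v" if "(a0, a) \<in> r" "v \<in> V a0" for a v
    proof -
      have "v \<in> M a0 a ` V a" using Vimg[OF that(1)] that(2) by simp
      then show ?thesis by (simp add: h_def inv_into_into f_inv_into_f)
    qed
    have hM: "h a (M a0 a w) = w" if "(a0, a) \<in> r" "w \<in> V a" for a w
      using hinj[OF that(1)] that(2) by (simp add: h_def inv_into_f_f)
    have V0D: "V a0 \<subseteq> D a0" using VD[OF a0(1)] .
    have tot: "(a, b) \<in> r \<or> (b, a) \<in> r" if "a \<in> Field r" "b \<in> Field r" for a b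
      using wo_total[OF wo that] .
    have tr: "(a, c) \<in> r" if "(a, b) \<in> r" "(b, c) \<in> r" for a b c
      using wo_trans[OF wo that] .
    have \<theta>L: "\<theta> v \<in> L" if v: "v \<in> V a0" for v
    proof (rule Lin)
      fix a assume a: "a \<in> Field r"
      show "\<theta> v a \<in> D a"
      proof (cases "(a0, a) \<in> r")
        case True
        then show ?thesis using hV[OF True v] VD[OF a] a by (auto simp: \<theta>_def)
      next
        case False
        then have "(a, a0) \<in> r" using tot[OF a a0(1)] by auto
        then show ?thesis using Md v V0D a False by (auto simp: \<theta>_def)
      qed
    next
      fix a b assume ab: "(a, b) \<in> r"
      then have F: "a \<in> Field r" "b \<in> Field r" by (auto intro: FieldI1 FieldI2)
      show "M a b (\<theta> v b) = \<theta> v a"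
      proof (cases "(a0, a) \<in> r")
        case True
        then have b: "(a0, b) \<in> r" using tr ab by blast
        define w where "w = h b v"
        have w: "w \<in> V b" "M a0 b w = v" using hV[OF b v] by (auto simp: w_def)
        have "M a b w \<in> V a" using Vimg[OF ab] w(1) by blast
        moreover have "M a0 a (M a b w) = v" using Mc[OF True ab] w VD[OF F(2)] by auto
        ultimately have "h a v = M a b w" using hM[OF True] by metis
        then show ?thesis using True b F by (simp add: \<theta>_def w_def)
      next
        case False
        then have aa0: "(a, a0) \<in> r" using tot[OF F(1) a0(1)] by auto
        show ?thesis
        proof (cases "(a0, b) \<in> r")
          case True
          define w where "w = h b v"
          have w: "w \<in> V b" "M a0 b w = v" using hV[OF True v] by (auto simp: w_def)
          have "M a a0 (M a0 b w) = M a b w" using Mc[OF aa0 True] w VD[OF F(2)] by auto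
          then show ?thesis using True False F w by (simp add: \<theta>_def w_def)
        next
          case False2: False
          then have "(b, a0) \<in> r" using tot[OF F(2) a0(1)] by auto
          then have "M a b (M b a0 v) = M a a0 v" using Mc[OF ab] v V0D by auto
          then show ?thesis using False False2 F by (simp add: \<theta>_def)
        qed
      qed
    next
      fix a assume "a \<notin> Field r"
      then show "\<theta> v a = undefined" by (simp add: \<theta>_def)
    qed
    define s where "s = ren \<theta> (sr a0)"
    have sTm: "s \<in> Tm ar L" using sr[OF a0(1)] \<theta>L by (auto simp: s_def Tm_iff V_def)
    have "y = \<Phi> (teq ar E L `` {s})"
    proof
      fix a
      show "y a = \<Phi> (teq ar E L `` {s}) a"
      proof (cases "a \<in> Field r")
        case False
        then show ?thesis using yU Phi_out by simp
      next
        case a: True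
        have 1: "\<Phi> (teq ar E L `` {s}) a = teq ar E (D a) `` {ren ((\<lambda>x. x a) \<circ> \<theta>) (sr a0)}"
          using Phi_cls[OF sTm a] by (simp add: s_def ren_comp)
        show ?thesis
        proof (cases "(a0, a) \<in> r")
          case True
          have 2: "ren ((\<lambda>x. x a) \<circ> \<theta>) (sr a0) = ren (h a) (sr a0)"
            using a True by (intro ren_cong) (simp add: \<theta>_def)
          have "h a ` vars_tm (ren (M a0 a) (sr a)) \<subseteq> D a"
            using Vimg[OF True] hV[OF True] VD[OF a] by (auto simp: V_def)
          from teq_map[OF compat[OF True] this]
          have 3: "(ren (h a) (ren (M a0 a) (sr a)), ren (h a) (sr a0)) \<in> teq ar E (D a)" .
          have "ren (h a) (ren (M a0 a) (sr a)) = sr a"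
            unfolding ren_comp by (rule ren_id_on) (simp add: hM[OF True] V_def)
          with 3 have "(sr a, ren (h a) (sr a0)) \<in> teq ar E (D a)" by simp
          then have "teq ar E (D a) `` {sr a} = teq ar E (D a) `` {ren (h a) (sr a0)}"
            using cls_eq_iff teq_Tm by blast
          then show ?thesis using 1 2 sr[OF a] by simp
        next
          case False
          then have aa0: "(a, a0) \<in> r" using tot[OF a a0(1)] by auto
          have 2: "ren ((\<lambda>x. x a) \<circ> \<theta>) (sr a0) = ren (M a a0) (sr a0)"
            using a False by (intro ren_cong) (simp add: \<theta>_def)
          have Mv: "M a a0 ` vars_tm (sr a0) \<subseteq> D a" using Md[OF aa0] V0D by (auto simp: V_def)
          have "Tmap ar E (D a) (M a a0) (y a0) = teq ar E (D a) `` {ren (M a a0) (sr a0)}"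
            using sr[OF a0(1)] Tmap_cls[OF _ Mv] by simp
          then show ?thesis using yM[OF aa0] 1 2 by simp
        qed
      qed
    qed
    moreover have "teq ar E L `` {s} \<in> Tobj ar E L" using sTm by (rule cls_in_Tobj)
    ultimately show "\<exists>c\<in>Tobj ar E L. y = \<Phi> c" by blast
  qed
  then show ?thesis by (simp add: \<Phi>_def L_def T_def)
qed

end

theorem mainTheorem2:
  fixes ar :: "'f \<Rightarrow> nat"
    and E :: "(('f, 'v) tm \<times> ('f, 'v) tm) set"
  assumes eqs_wf: "\<forall>(l, r) \<in> E. wf_tm ar l \<and> wf_tm ar r"
    and no_drop: "\<forall>e \<in> E. \<not> drop_equation e"
  shows
    \<comment> \<open>T preserves pullbacks of an inclusion Z \<subseteq> Y along any f : X \<rightarrow> Y\<close>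
    "(\<forall>(X :: 'x set) (Y :: 'y set) Z f. f ` X \<subseteq> Y \<longrightarrow> Z \<subseteq> Y \<longrightarrow>
        (let P = {x \<in> X. f x \<in> Z} in
         bij_betw (\<lambda>c. (Tmap ar E X id c, Tmap ar E Z f c)) (Tobj ar E P)
           {(a, b). a \<in> Tobj ar E X \<and> b \<in> Tobj ar E Z \<and> Tmap ar E Y f a = Tmap ar E Y id b}))
   \<and> \<comment> \<open>in particular T preserves monomorphisms\<close>
    (\<forall>(X :: 'a set) (Y :: 'b set) g. g ` X \<subseteq> Y \<longrightarrow> inj_on g X \<longrightarrow>
        inj_on (Tmap ar E Y g) (Tobj ar E X))
   \<and> \<comment> \<open>T preserves \<rho>^op-indexed limits for uncountable regular \<rho>\<close>
    (\<forall>(r :: 'i rel) (D :: 'i \<Rightarrow> 'c set) M.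
        regular_ordinal r \<longrightarrow> \<not> countable (Field r) \<longrightarrow> op_diagram r D M \<longrightarrow>
        bij_betw (\<lambda>c a. if a \<in> Field r then Tmap ar E (D a) (\<lambda>x. x a) c else undefined)
          (Tobj ar E (set_lim r D M))
          (set_lim r (\<lambda>a. Tobj ar E (D a)) (\<lambda>a b. Tmap ar E (D a) (M a b))))"
proof -
  interpret nd ar E using eqs_wf no_drop by (rule nd.intro)
  show ?thesis
    by (intro conjI allI impI) (simp_all add: Let_def part1 part2 part3)
qed

end
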